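(* Let $\sigma\subseteq N_\mathbb{Q}$ be a strongly convex rational polyhedral cone, $\tau$ a $k$-dimensional regular face with primitive ray generators $p_1,\ldots,p_k$, $\{e_1^{(r)},e_2^{(r)}\}_{r=1}^k$ a set of Demazure roots of $\sigma$ compatible with $\tau$, and $\gamma$ a face of $\sigma$. Suppose that for each $r$ with $p_r\notin\gamma$ at least one of $e_1^{(r)},e_2^{(r)}$ lies in $\gamma^\perp$. Then the cone generated by $\gamma$ and $\{p_r: p_r\notin\gamma\}$ is a face of $\sigma$.
   Context: $N$ lattice, $M$ dual, $\langle\cdot,\cdot\rangle$ pairing. Regular face: primitive ray generators extend to a basis of $N$. Demazure root for a ray generator $p_i$ of $\sigma$: $e\in M$ with $\langle p_i,e\rangle=-1$ and $\langle p_j,e\rangle\ge0$ for all other ray generators $p_j$ of $\sigma$. Compatibility with $\tau$: $\langle p_s,e_1^{(r)}\rangle=\langle p_s,e_2^{(r)}\rangle=-\delta_{rs}$ for $r,s=1,\ldots,k$. *)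

theory Defs
  imports "HOL-Analysis.Analysis"
begin

text \<open>Lattice N = int^'n, dual lattice M = int^'n, N_Q = rat^'n.
  The rank n = CARD('n) is arbitrary (type variable).\<close>

definition ofv :: "int^'n \<Rightarrow> rat^'n" where
  "ofv p = (\<chi> i. of_int (p $ i))"

definition pairQ :: "rat^'n::finite \<Rightarrow> int^'n \<Rightarrow> rat" where
  "pairQ x u = (\<Sum>i\<in>UNIV. x $ i * of_int (u $ i))"

definition pairZ :: "int^'n::finite \<Rightarrow> int^'n \<Rightarrow> int" where
  "pairZ p u = (\<Sum>i\<in>UNIV. p $ i * u $ i)"

definition cone_hullQ :: "(rat^'n::finite) set \<Rightarrow> (rat^'n) set" where
  "cone_hullQ S = {\<Sum>v\<in>F. c v *s v | F c. finite F \<and> F \<subseteq> S \<and> (\<forall>v\<in>F. c v \<ge> 0)}"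

definition rational_polyhedral_cone :: "(rat^'n::finite) set \<Rightarrow> bool" where
  "rational_polyhedral_cone \<sigma> \<longleftrightarrow> (\<exists>G::(int^'n) set. finite G \<and> \<sigma> = cone_hullQ (ofv ` G))"

definition strongly_convex :: "(rat^'n::finite) set \<Rightarrow> bool" where
  "strongly_convex \<sigma> \<longleftrightarrow> \<sigma> \<inter> uminus ` \<sigma> = {0}"

definition is_face :: "(rat^'n::finite) set \<Rightarrow> (rat^'n) set \<Rightarrow> bool" where
  "is_face \<tau> \<sigma> \<longleftrightarrow> (\<exists>u::int^'n. (\<forall>x\<in>\<sigma>. pairQ x u \<ge> 0) \<and> \<tau> = {x\<in>\<sigma>. pairQ x u = 0})"

definition primitive :: "int^'n::finite \<Rightarrow> bool" where
  "primitive p \<longleftrightarrow> p \<noteq> 0 \<and> (\<forall>(k::int) q. p = k *s q \<longrightarrow> \<bar>k\<bar> = 1)"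

definition ray_gens :: "(rat^'n::finite) set \<Rightarrow> (int^'n) set" where
  "ray_gens \<sigma> = {p. primitive p \<and> is_face (cone_hullQ {ofv p}) \<sigma>}"

definition Z_basis :: "('n \<Rightarrow> int^'n) \<Rightarrow> bool" where
  "Z_basis f \<longleftrightarrow> (\<forall>x::int^'n::finite. \<exists>!c::'n \<Rightarrow> int. x = (\<Sum>i\<in>UNIV. c i *s f i))"

definition regular_face_with_gens :: "(rat^'n::finite) set \<Rightarrow> (rat^'n) set \<Rightarrow> nat \<Rightarrow> (nat \<Rightarrow> int^'n) \<Rightarrow> bool" where
  "regular_face_with_gens \<tau> \<sigma> k p \<longleftrightarrow>
     is_face \<tau> \<sigma> \<and> inj_on p {1..k} \<and> ray_gens \<tau> = p ` {1..k} \<and>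
     (\<exists>f :: 'n \<Rightarrow> int^'n. \<exists>\<iota> :: nat \<Rightarrow> 'n. Z_basis f \<and> inj_on \<iota> {1..k} \<and> (\<forall>r\<in>{1..k}. f (\<iota> r) = p r))"

definition demazure_root :: "(rat^'n::finite) set \<Rightarrow> int^'n \<Rightarrow> int^'n \<Rightarrow> bool" where
  "demazure_root \<sigma> p e \<longleftrightarrow> p \<in> ray_gens \<sigma> \<and> pairZ p e = -1 \<and>
     (\<forall>q\<in>ray_gens \<sigma>. q \<noteq> p \<longrightarrow> pairZ q e \<ge> 0)"

definition perp :: "(rat^'n::finite) set \<Rightarrow> (int^'n) set" where
  "perp \<gamma> = {e. \<forall>x\<in>\<gamma>. pairQ x e = 0}"

end

theory Submission
  imports Defs
begin


lemma between_exists: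
  fixes X Y :: "'a::linordered_field set"
  assumes "finite X" "finite Y" "\<forall>x\<in>X. \<forall>y\<in>Y. x < y"
  shows "\<exists>z. (\<forall>x\<in>X. x < z) \<and> (\<forall>y\<in>Y. z < y)"
proof (cases "X = {}")
  case True
  show ?thesis
  proof (cases "Y = {}")
    case True then show ?thesis using \<open>X = {}\<close> by auto
  next
    case False
    have "\<forall>y\<in>Y. Min Y - 1 < y" using Min_le[OF assms(2)] by fastforce
    then show ?thesis using \<open>X = {}\<close> by blast
  qed
next
  case False
  show ?thesis
  proof (cases "Y = {}")
    case True
    have "\<forall>x\<in>X. x < Max X + 1" using Max_ge[OF assms(1)] by fastforce
    then show ?thesis using \<open>Y = {}\<close> by blast
  next
    case F2: False
    have "Max X < Min Y" using assms False F2 by auto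
    then have "\<forall>x\<in>X. x < (Max X + Min Y)/2" "\<forall>y\<in>Y. (Max X + Min Y)/2 < y"
      using Max_ge[OF assms(1)] Min_le[OF assms(2)] by (fastforce simp: field_simps)+
    then show ?thesis by blast
  qed
qed

lemma gordan:
  fixes A :: "('j \<Rightarrow> 'a::linordered_field) set"
  assumes "finite J" "finite A"
  shows "(\<exists>v. \<forall>a\<in>A. 0 < (\<Sum>i\<in>J. a i * v i)) \<or>
         (\<exists>l. (\<forall>a\<in>A. 0 \<le> l a) \<and> (\<exists>a\<in>A. 0 < l a) \<and> (\<forall>i\<in>J. (\<Sum>a\<in>A. l a * a i) = 0))"
  using assms
proof (induction J arbitrary: A rule: finite_induct)
  case empty
  then show ?case by (cases "A = {}") (auto intro!: exI[of _ "\<lambda>_. 1"])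
next
  case (insert j J)
  define Z where "Z = {a\<in>A. a j = 0}"
  define P where "P = {a\<in>A. a j > 0}"
  define N where "N = {a\<in>A. a j < 0}"
  define comb where "comb = (\<lambda>(a::'j\<Rightarrow>'a, b::'j\<Rightarrow>'a). (\<lambda>i. (- b j) * a i + a j * b i))"
  define B where "B = Z \<union> comb ` (P \<times> N)"
  have fin: "finite Z" "finite P" "finite N" using insert.prems by (auto simp: Z_def P_def N_def)
  then have finB: "finite B" by (auto simp: B_def)
  have Adec: "\<And>a. a \<in> A \<Longrightarrow> a \<in> Z \<or> a \<in> P \<or> a \<in> N" by (auto simp: Z_def P_def N_def)
  from insert.IH[OF finB] show ?case
  proof
    assume "\<exists>v. \<forall>a\<in>B. 0 < (\<Sum>i\<in>J. a i * v i)"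
    then obtain v where v: "\<And>a. a\<in>B \<Longrightarrow> 0 < (\<Sum>i\<in>J. a i * v i)" by blast
    define sa where "sa = (\<lambda>a::'j\<Rightarrow>'a. \<Sum>i\<in>J. a i * v i)"
    have LU: "- sa a / a j < - sa b / b j" if "a \<in> P" "b \<in> N" for a b
    proof -
      have "comb (a,b) \<in> B" using that by (auto simp: B_def)
      then have "0 < sa (comb (a,b))" using v sa_def by auto
      also have "sa (comb (a,b)) = (- b j) * sa a + a j * sa b"
        unfolding sa_def comb_def sum_distrib_left sum.distrib[symmetric] sum_negf[symmetric]
        by (rule sum.cong) (simp_all add: algebra_simps)
      finally have h: "0 < (- b j) * sa a + a j * sa b" .
      have "a j > 0" "b j < 0" using that by (auto simp: P_def N_def)
      with h show ?thesis by (simp add: field_simps)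
    qed
    obtain z where z: "\<forall>x\<in>(\<lambda>a. - sa a / a j) ` P. x < z" "\<forall>y\<in>(\<lambda>b. - sa b / b j) ` N. z < y"
      using between_exists[of "(\<lambda>a. - sa a / a j) ` P" "(\<lambda>b. - sa b / b j) ` N"] fin LU by auto
    define v' where "v' = v(j := z)"
    have sv: "(\<Sum>i\<in>insert j J. a i * v' i) = a j * z + sa a" for a
    proof -
      have "(\<Sum>i\<in>J. a i * v' i) = sa a" unfolding sa_def v'_def
        by (rule sum.cong) (use insert.hyps in auto)
      then show ?thesis using insert.hyps by (simp add: v'_def)
    qed
    have "0 < (\<Sum>i\<in>insert j J. a i * v' i)" if aA: "a \<in> A" for a
    proof -
      consider "a \<in> Z" | "a \<in> P" | "a \<in> N" using Adec[OF aA] by blast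
      then show ?thesis
      proof cases
        case 1
        then have "a \<in> B" "a j = 0" by (auto simp: B_def Z_def)
        then show ?thesis using v sv sa_def by simp
      next
        case 2
        then have "- sa a / a j < z" "a j > 0" using z by (auto simp: P_def)
        then show ?thesis unfolding sv by (simp add: field_simps)
      next
        case 3
        then have "z < - sa a / a j" "a j < 0" using z by (auto simp: N_def)
        then show ?thesis unfolding sv by (simp add: field_simps)
      qed
    qed
    then show ?thesis by blast
  next
    assume "\<exists>l. (\<forall>a\<in>B. 0 \<le> l a) \<and> (\<exists>a\<in>B. 0 < l a) \<and> (\<forall>i\<in>J. (\<Sum>a\<in>B. l a * a i) = 0)"
    then obtain l where l0: "\<And>a. a\<in>B \<Longrightarrow> 0 \<le> l a" and lpos: "\<exists>a\<in>B. 0 < l a"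
      and lsum: "\<And>i. i\<in>J \<Longrightarrow> (\<Sum>a\<in>B. l a * a i) = 0" by blast
    have rep: "\<exists>w. (\<forall>a\<in>A. 0 \<le> w a) \<and> (\<exists>a\<in>A. 0 < w a) \<and> (\<forall>i. c i = (\<Sum>a\<in>A. w a * a i))"
      if cB: "c \<in> B" for c
    proof (cases "c \<in> Z")
      case True
      then have "c \<in> A" by (auto simp: Z_def)
      then show ?thesis using insert.prems
        by (intro exI[of _ "\<lambda>x. if x = c then 1 else 0"]) (auto simp: mult_delta_left)
    next
      case False
      then obtain a b where ab: "a \<in> P" "b \<in> N" "c = comb (a,b)" using cB by (auto simp: B_def)
      then have abA: "a \<in> A" "b \<in> A" "a j > 0" "b j < 0" by (auto simp: P_def N_def)
      then have "a \<noteq> b" by auto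
      define w where "w = (\<lambda>x. (if x = a then - b j else 0) + (if x = b then a j else 0))"
      have "c i = (\<Sum>x\<in>A. w x * x i)" for i
      proof -
        have "(\<Sum>x\<in>A. w x * x i) = (\<Sum>x\<in>A. (if x = a then - b j * a i else 0) + (if x = b then a j * b i else 0))"
          by (rule sum.cong) (auto simp: w_def)
        also have "\<dots> = - b j * a i + a j * b i"
          using abA insert.prems by (simp add: sum.distrib)
        finally show ?thesis by (simp add: ab(3) comb_def)
      qed
      then have "\<forall>i. c i = (\<Sum>x\<in>A. w x * x i)" by blast
      moreover have "\<forall>x\<in>A. 0 \<le> w x" using abA by (auto simp: w_def)
      moreover have "0 < w a" using abA \<open>a \<noteq> b\<close> by (simp add: w_def)
      ultimately show ?thesis using abA(1) by blast
    qed
    then have "\<forall>c\<in>B. \<exists>w. (\<forall>a\<in>A. 0 \<le> w a) \<and> (\<exists>a\<in>A. 0 < w a) \<and> (\<forall>i. c i = (\<Sum>a\<in>A. w a * a i))"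
      by blast
    from bchoice[OF this] obtain coef where
      coefall: "\<forall>c\<in>B. (\<forall>a\<in>A. 0 \<le> coef c a) \<and> (\<exists>a\<in>A. 0 < coef c a) \<and> (\<forall>i. c i = (\<Sum>a\<in>A. coef c a * a i))"
      by blast
    have coef0: "\<And>c a. c \<in> B \<Longrightarrow> a \<in> A \<Longrightarrow> 0 \<le> coef c a"
      and coefpos: "\<And>c. c \<in> B \<Longrightarrow> \<exists>a\<in>A. 0 < coef c a"
      and coefrep: "\<And>c i. c \<in> B \<Longrightarrow> c i = (\<Sum>a\<in>A. coef c a * a i)"
      using coefall by blast+
    define mu where "mu = (\<lambda>a. \<Sum>c\<in>B. l c * coef c a)"
    have mu0: "\<forall>a\<in>A. 0 \<le> mu a" unfolding mu_def
      by (auto intro!: sum_nonneg simp: l0 coef0)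
    have mupos: "\<exists>a\<in>A. 0 < mu a"
    proof -
      obtain c where c: "c \<in> B" "0 < l c" using lpos by blast
      obtain a where a: "a \<in> A" "0 < coef c a" using coefpos[OF c(1)] by blast
      have "l c * coef c a \<le> mu a" unfolding mu_def
        by (rule member_le_sum) (use c a finB l0 coef0 in auto)
      moreover have "0 < l c * coef c a" using a c by simp
      ultimately show ?thesis using a by force
    qed
    have musum: "(\<Sum>a\<in>A. mu a * a i) = (\<Sum>c\<in>B. l c * c i)" for i
    proof -
      have "(\<Sum>a\<in>A. mu a * a i) = (\<Sum>a\<in>A. \<Sum>c\<in>B. l c * (coef c a * a i))"
        by (simp add: mu_def sum_distrib_right mult.assoc)
      also have "\<dots> = (\<Sum>c\<in>B. l c * (\<Sum>a\<in>A. coef c a * a i))"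
        by (subst sum.swap) (simp add: sum_distrib_left)
      also have "\<dots> = (\<Sum>c\<in>B. l c * c i)"
        by (rule sum.cong) (auto simp: coefrep)
      finally show ?thesis .
    qed
    have Bj: "c j = 0" if "c \<in> B" for c
      using that by (auto simp: B_def Z_def comb_def)
    have "\<forall>i\<in>insert j J. (\<Sum>a\<in>A. mu a * a i) = 0"
      using lsum Bj by (auto simp: musum intro!: sum.neutral)
    then show ?thesis using mu0 mupos by blast
  qed
qed



lemma cone_zero: "0 \<in> cone_hullQ S"
  unfolding cone_hullQ_def by (rule CollectI, rule exI[of _ "{}"]) auto

lemma cone_base: "v \<in> S \<Longrightarrow> v \<in> cone_hullQ S"
  unfolding cone_hullQ_def
  by (rule CollectI, rule exI[of _ "{v}"], rule exI[of _ "\<lambda>_. 1"]) auto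

lemma cone_scale:
  assumes "x \<in> cone_hullQ S" "0 \<le> t"
  shows "t *s x \<in> cone_hullQ S"
proof -
  obtain F c where x: "x = (\<Sum>v\<in>F. c v *s v)" "finite F" "F \<subseteq> S" "\<forall>v\<in>F. c v \<ge> 0"
    using assms(1) unfolding cone_hullQ_def by blast
  have "t *s x = (\<Sum>v\<in>F. (t * c v) *s v)"
    unfolding x(1) by (simp add: vec_eq_iff sum_distrib_left mult.assoc)
  then show ?thesis unfolding cone_hullQ_def using x assms(2)
    by (intro CollectI exI[of _ F] exI[of _ "\<lambda>v. t * c v"]) auto
qed

lemma cone_add:
  assumes "x \<in> cone_hullQ S" "y \<in> cone_hullQ S"
  shows "x + y \<in> cone_hullQ S"
proof -
  obtain F c where x: "x = (\<Sum>v\<in>F. c v *s v)" "finite F" "F \<subseteq> S" "\<forall>v\<in>F. c v \<ge> 0"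
    using assms(1) unfolding cone_hullQ_def by blast
  obtain G d where y: "y = (\<Sum>v\<in>G. d v *s v)" "finite G" "G \<subseteq> S" "\<forall>v\<in>G. d v \<ge> 0"
    using assms(2) unfolding cone_hullQ_def by blast
  define e where "e = (\<lambda>v. (if v \<in> F then c v else 0) + (if v \<in> G then d v else 0))"
  have 1: "(\<Sum>v\<in>F \<union> G. (if v \<in> F then c v else 0) *s v) = x"
  proof -
    have "(\<Sum>v\<in>F \<union> G. (if v \<in> F then c v else 0) *s v) = (\<Sum>v\<in>F \<union> G. if v \<in> F then c v *s v else 0)"
      by (rule sum.cong) auto
    also have "\<dots> = (\<Sum>v\<in>F. c v *s v)"
      using x(2) y(2) by (simp add: sum.inter_restrict[symmetric] Int_absorb1)
    finally show ?thesis using x(1) by simp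
  qed
  have 2: "(\<Sum>v\<in>F \<union> G. (if v \<in> G then d v else 0) *s v) = y"
  proof -
    have "(\<Sum>v\<in>F \<union> G. (if v \<in> G then d v else 0) *s v) = (\<Sum>v\<in>F \<union> G. if v \<in> G then d v *s v else 0)"
      by (rule sum.cong) auto
    also have "\<dots> = (\<Sum>v\<in>G. d v *s v)"
      using x(2) y(2) by (simp add: sum.inter_restrict[symmetric] Int_absorb1)
    finally show ?thesis using y(1) by simp
  qed
  have "x + y = (\<Sum>v\<in>F \<union> G. e v *s v)"
    unfolding e_def vector_sadd_rdistrib sum.distrib 1 2 ..
  moreover have "\<forall>v\<in>F \<union> G. e v \<ge> 0" using x(4) y(4) by (auto simp: e_def)
  ultimately show ?thesis unfolding cone_hullQ_def using x y
    by (intro CollectI exI[of _ "F \<union> G"] exI[of _ e]) auto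
qed

lemma cone_sum:
  assumes "finite I" "\<forall>i\<in>I. f i \<in> cone_hullQ S"
  shows "(\<Sum>i\<in>I. f i) \<in> cone_hullQ S"
  using assms by (induction I rule: finite_induct) (auto simp: cone_zero cone_add)

lemma cone_elem:
  assumes "x \<in> cone_hullQ S"
  obtains F c where "x = (\<Sum>v\<in>F. c v *s v)" "finite F" "F \<subseteq> S" "\<forall>v\<in>F. c v \<ge> 0"
  using assms unfolding cone_hullQ_def by blast

lemma cone_hull_mono:
  assumes "T \<subseteq> cone_hullQ S"
  shows "cone_hullQ T \<subseteq> cone_hullQ S"
proof
  fix x assume "x \<in> cone_hullQ T"
  then obtain F c where x: "x = (\<Sum>v\<in>F. c v *s v)" "finite F" "F \<subseteq> T" "\<forall>v\<in>F. c v \<ge> 0"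
    by (rule cone_elem)
  show "x \<in> cone_hullQ S" unfolding x(1)
    using x assms by (intro cone_sum) (auto intro!: cone_scale)
qed

lemma cone_single: "cone_hullQ {v} = {t *s v | t. t \<ge> 0}"
proof
  show "cone_hullQ {v} \<subseteq> {t *s v | t. t \<ge> 0}"
  proof
    fix x assume "x \<in> cone_hullQ {v}"
    then obtain F c where x: "x = (\<Sum>v\<in>F. c v *s v)" "finite F" "F \<subseteq> {v}" "\<forall>v\<in>F. c v \<ge> 0"
      by (rule cone_elem)
    then have "F = {} \<or> F = {v}" by auto
    then show "x \<in> {t *s v | t. t \<ge> 0}"
    proof
      assume "F = {}" then show ?thesis using x(1) by (auto intro!: exI[of _ 0])
    next
      assume "F = {v}" then show ?thesis using x by auto
    qed
  qed
  show "{t *s v | t. t \<ge> 0} \<subseteq> cone_hullQ {v}"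
    using cone_scale cone_base by blast
qed

lemma pairQ_add: "pairQ (x + y) u = pairQ x u + pairQ y u"
  by (simp add: pairQ_def distrib_right sum.distrib)
lemma pairQ_scale: "pairQ (t *s x) u = t * pairQ x u"
  by (simp add: pairQ_def sum_distrib_left mult.assoc)
lemma pairQ_zero: "pairQ 0 u = 0"
  by (simp add: pairQ_def)
lemma pairQ_sum: "finite F \<Longrightarrow> pairQ (\<Sum>i\<in>F. f i) u = (\<Sum>i\<in>F. pairQ (f i) u)"
  by (induction F rule: finite_induct) (auto simp: pairQ_add pairQ_zero)
lemma pairQ_add2: "pairQ x (u + u') = pairQ x u + pairQ x u'"
  by (simp add: pairQ_def distrib_left sum.distrib)
lemma pairQ_scale2: "pairQ x (t *s u) = of_int t * pairQ x u"
  by (simp add: pairQ_def sum_distrib_left algebra_simps)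
lemma pairQ_zero2: "pairQ x 0 = 0"
  by (simp add: pairQ_def)
lemma pairQ_sum2: "finite F \<Longrightarrow> pairQ x (\<Sum>i\<in>F. f i) = (\<Sum>i\<in>F. pairQ x (f i))"
  by (induction F rule: finite_induct) (auto simp: pairQ_add2 pairQ_zero2)
lemma pairQ_ofv: "pairQ (ofv p) u = of_int (pairZ p u)"
  by (simp add: pairQ_def pairZ_def ofv_def)

lemma pairQ_cone_nonneg:
  assumes "x \<in> cone_hullQ S" "\<forall>v\<in>S. pairQ v u \<ge> 0"
  shows "pairQ x u \<ge> 0"
proof -
  obtain F c where x: "x = (\<Sum>v\<in>F. c v *s v)" "finite F" "F \<subseteq> S" "\<forall>v\<in>F. c v \<ge> 0"
    using assms(1) by (rule cone_elem)
  show ?thesis unfolding x(1) using x assms(2)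
    by (auto simp: pairQ_sum pairQ_scale intro!: sum_nonneg)
qed

lemma pairQ_cone_zero:
  assumes "x \<in> cone_hullQ S" "\<forall>v\<in>S. pairQ v u = 0"
  shows "pairQ x u = 0"
proof -
  obtain F c where x: "x = (\<Sum>v\<in>F. c v *s v)" "finite F" "F \<subseteq> S" "\<forall>v\<in>F. c v \<ge> 0"
    using assms(1) by (rule cone_elem)
  show ?thesis unfolding x(1) using x assms(2)
    by (auto simp: pairQ_sum pairQ_scale intro!: sum.neutral)
qed

lemma pairQ_cone_face:
  assumes "x \<in> cone_hullQ S" "\<forall>v\<in>S. pairQ v u \<ge> 0" "pairQ x u = 0"
  shows "x \<in> cone_hullQ {v\<in>S. pairQ v u = 0}"
proof -
  obtain F c where x: "x = (\<Sum>v\<in>F. c v *s v)" "finite F" "F \<subseteq> S" "\<forall>v\<in>F. c v \<ge> 0"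
    using assms(1) by (rule cone_elem)
  have "(\<Sum>v\<in>F. c v * pairQ v u) = 0" using assms(3) x(1,2) by (simp add: pairQ_sum pairQ_scale)
  moreover have nn: "\<And>v. v\<in>F \<Longrightarrow> 0 \<le> c v * pairQ v u" using x(3,4) assms(2) by auto
  ultimately have z: "\<forall>v\<in>F. c v * pairQ v u = 0"
    using sum_nonneg_eq_0_iff[OF x(2) nn] by simp
  have "x = (\<Sum>v\<in>F. (if pairQ v u = 0 then c v *s v else 0))"
    unfolding x(1) by (rule sum.cong) (use z in auto)
  also have "\<dots> = (\<Sum>v\<in>{v\<in>F. pairQ v u = 0}. c v *s v)"
    using x(2) by (simp add: sum.inter_filter)
  finally show ?thesis unfolding cone_hullQ_def using x
    by (intro CollectI exI[of _ "{v\<in>F. pairQ v u = 0}"] exI[of _ c]) auto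
qed



lemma int_scale:
  fixes q :: "rat^'n::finite"
  shows "\<exists>d::int. d > 0 \<and> (\<forall>i. \<exists>z::int. of_int d * q$i = of_int z)"
proof -
  define b where "b = (\<lambda>i. snd (quotient_of (q$i)))"
  define a where "a = (\<lambda>i. fst (quotient_of (q$i)))"
  have bpos: "b i > 0" for i unfolding b_def using quotient_of_denom_pos[of "q$i"]
    by (metis prod.collapse)
  have qi: "q$i = of_int (a i) / of_int (b i)" for i
    unfolding a_def b_def using quotient_of_div[of "q$i"] by (metis prod.collapse)
  define D where "D = (\<Prod>i\<in>UNIV. b i)"
  have "D > 0" unfolding D_def using bpos by (simp add: prod_pos)
  moreover have "\<exists>z::int. of_int D * q$i = of_int z" for i
  proof -
    have "b i dvd D" unfolding D_def by (rule dvd_prodI) auto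
    then obtain e where e: "D = b i * e" by blast
    have "of_int D * q$i = of_int (e * a i)"
      using bpos[of i] unfolding qi e by (simp add: field_simps)
    then show ?thesis by blast
  qed
  ultimately show ?thesis by blast
qed

lemma ofv_scale: "ofv (m *s p) = of_int m *s ofv p"
  by (simp add: ofv_def vec_eq_iff)

lemma ofv_zero_iff: "ofv g = 0 \<longleftrightarrow> g = 0"
  by (simp add: ofv_def vec_eq_iff)

lemma primitive_scale:
  fixes g :: "int^'n::finite"
  assumes "g \<noteq> 0"
  shows "\<exists>m p. m > 0 \<and> g = m *s p \<and> primitive p"
proof -
  obtain j where j: "g$j \<noteq> 0" using assms by (auto simp: vec_eq_iff)
  define M where "M = {m::nat. m > 0 \<and> (\<exists>q. g = int m *s q)}"
  have Mb: "M \<subseteq> {..nat \<bar>g$j\<bar>}"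
  proof
    fix m assume "m \<in> M"
    then obtain q where "m > 0" "g = int m *s q" by (auto simp: M_def)
    then have "g$j = int m * q$j" by simp
    with j have "q$j \<noteq> 0" "\<bar>g$j\<bar> = int m * \<bar>q$j\<bar>" by (auto simp: abs_mult)
    moreover have "int m * 1 \<le> int m * \<bar>q$j\<bar>"
      using \<open>q$j \<noteq> 0\<close> by (intro mult_left_mono) auto
    ultimately have "int m \<le> \<bar>g$j\<bar>" by simp
    then show "m \<in> {..nat \<bar>g$j\<bar>}" by auto
  qed
  have finM: "finite M" using Mb finite_subset by blast
  have "1 \<in> M" unfolding M_def by (auto intro!: exI[of _ g])
  define m where "m = Max M"
  have "m \<in> M" unfolding m_def using finM \<open>1 \<in> M\<close> by (intro Max_in) auto
  then obtain p where m0: "m > 0" and gp: "g = int m *s p" by (auto simp: M_def)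
  have pnz: "p \<noteq> 0" using assms gp by auto
  have "\<bar>k\<bar> = 1" if pk: "p = k *s q" for k q
  proof -
    have "k \<noteq> 0" using pnz pk by auto
    have "g = (int m * \<bar>k\<bar>) *s (sgn k *s q)"
      using gp pk by (simp add: vector_smult_assoc mult.assoc abs_mult_sgn mult.commute[of "\<bar>k\<bar>"] mult.left_commute)
    then have "nat (int m * \<bar>k\<bar>) \<in> M" using m0 \<open>k \<noteq> 0\<close> unfolding M_def
      by (auto intro!: exI[of _ "sgn k *s q"])
    then have "nat (int m * \<bar>k\<bar>) \<le> m" unfolding m_def using finM by simp
    then have "int m * \<bar>k\<bar> \<le> int m" by linarith
    then have "\<bar>k\<bar> \<le> 1" using m0 by (simp add: mult_le_cancel_left1)
    then show ?thesis using \<open>k \<noteq> 0\<close> by linarith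
  qed
  then have "primitive p" using pnz unfolding primitive_def by blast
  then show ?thesis using m0 gp by (intro exI[of _ "int m"] exI[of _ p]) auto
qed

lemma sc_zero:
  assumes "strongly_convex \<sigma>" "x \<in> \<sigma>" "- x \<in> \<sigma>"
  shows "x = 0"
proof -
  have "x \<in> uminus ` \<sigma>" using assms(3) by (metis image_eqI minus_minus)
  then show ?thesis using assms(1,2) unfolding strongly_convex_def by blast
qed



lemma exposed:
  fixes \<sigma> :: "(rat^'n::finite) set"
  assumes sc: "strongly_convex \<sigma>" and finW: "finite W" and Wint: "W \<subseteq> range ofv"
    and sig: "\<sigma> = cone_hullQ W" and irr: "\<forall>w\<in>W. w \<notin> cone_hullQ (W - {w})" and wW: "w \<in> W"
  shows "w \<in> cone_hullQ (ofv ` ray_gens \<sigma>)"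
proof -
  obtain g where wg: "w = ofv g" using Wint wW by auto
  have wnz: "w \<noteq> 0" using irr wW cone_zero[of "W - {w}"] by auto
  then have "g \<noteq> 0" using wg ofv_zero_iff by auto
  then obtain m p where m0: "m > 0" and gp: "g = m *s p" and prim: "primitive p"
    using primitive_scale by blast
  have wp: "w = of_int m *s ofv p" using wg gp ofv_scale by simp
  obtain j0 where j0: "w$j0 \<noteq> 0" using wnz by (auto simp: vec_eq_iff)
  define H where "H = W - {w}"
  have finH: "finite H" using finW by (simp add: H_def)
  define \<pi> where "\<pi> = (\<lambda>h::rat^'n. (\<lambda>i. h$i - h$j0 / w$j0 * w$i))"
  define A where "A = \<pi> ` H"
  have finA: "finite A" using finH by (simp add: A_def)
  have HW: "cone_hullQ H \<subseteq> \<sigma>" unfolding sig H_def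
    by (rule cone_hull_mono) (auto intro: cone_base)
  have Ws: "w \<in> \<sigma>" using wW sig cone_base by auto
  have fU: "finite (UNIV::'n set)" by simp
  have gor: "(\<exists>l. (\<forall>a\<in>A. 0 \<le> l a) \<and> (\<exists>a\<in>A. 0 < l a) \<and> (\<forall>i\<in>UNIV. (\<Sum>a\<in>A. l a * a i) = 0)) \<or>
     (\<exists>v. \<forall>a\<in>A. 0 < (\<Sum>i\<in>UNIV. a i * v i))"
    using gordan[OF fU finA] by (rule disj_commute[THEN iffD1])
  show ?thesis
  proof (rule disjE[OF gor])
    assume "\<exists>l. (\<forall>a\<in>A. 0 \<le> l a) \<and> (\<exists>a\<in>A. 0 < l a) \<and> (\<forall>i\<in>UNIV. (\<Sum>a\<in>A. l a * a i) = 0)"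
    then obtain l a0 where l0: "\<And>a. a\<in>A \<Longrightarrow> 0 \<le> l a" and a0: "a0 \<in> A" "0 < l a0"
      and ls: "\<And>i. (\<Sum>a\<in>A. l a * a i) = 0" by blast
    define rep where "rep = (\<lambda>a. inv_into H \<pi> a)"
    have repH: "rep a \<in> H" if "a \<in> A" for a
      using that unfolding rep_def A_def by (auto intro: inv_into_into)
    have reppi: "\<pi> (rep a) = a" if "a \<in> A" for a
      using that unfolding rep_def A_def by (auto intro: f_inv_into_f)
    have reppi': "rep a $ i - rep a $ j0 / w$j0 * w$i = a i" if "a \<in> A" for a i
      using fun_cong[OF reppi[OF that], of i] unfolding \<pi>_def by simp
    define y where "y = (\<Sum>a\<in>A. l a *s rep a)"
    have ycone: "y \<in> cone_hullQ H" unfolding y_def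
      using finA l0 repH by (intro cone_sum) (auto intro!: cone_scale intro: cone_base)
    have ycomp: "y$i = (\<Sum>a\<in>A. l a * rep a $ i)" for i by (simp add: y_def)
    define t where "t = y$j0 / w$j0"
    have "y$i - t * w$i = 0" for i
    proof -
      have "y$i - t * w$i = (\<Sum>a\<in>A. l a * (rep a $ i - rep a $ j0 / w$j0 * w$i))"
        unfolding t_def ycomp
        by (simp add: sum_subtractf right_diff_distrib sum_distrib_right sum_divide_distrib mult.assoc)
      also have "\<dots> = (\<Sum>a\<in>A. l a * a i)"
        by (rule sum.cong[OF refl]) (simp only: reppi')
      finally show ?thesis using ls by simp
    qed
    then have yt: "y = t *s w" by (simp add: vec_eq_iff)
    show ?thesis
    proof (cases "t > 0")
      case True
      then have "w = (1/t) *s y" using yt by (simp add: vector_smult_assoc)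
      then have "w \<in> cone_hullQ H" using ycone True by (simp add: cone_scale)
      then show ?thesis using irr wW H_def by blast
    next
      case False
      have "- y = (- t) *s w" using yt by (simp add: vec_eq_iff)
      moreover have "(- t) *s w \<in> cone_hullQ W"
        using False wW by (intro cone_scale cone_base) auto
      ultimately have "- y \<in> \<sigma>" using sig by simp
      moreover have "y \<in> \<sigma>" using ycone HW by blast
      ultimately have y0: "y = 0" using sc_zero[OF sc] by blast
      define h0 where "h0 = rep a0"
      have h0H: "h0 \<in> H" using repH a0 h0_def by auto
      have "y = l a0 *s h0 + (\<Sum>a\<in>A - {a0}. l a *s rep a)"
        unfolding y_def h0_def using finA a0 by (simp add: sum.remove)
      then have e: "l a0 *s h0 + (\<Sum>a\<in>A - {a0}. l a *s rep a) = 0" using y0 by simp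
      have "- h0 $ i = ((1 / l a0) *s (\<Sum>a\<in>A - {a0}. l a *s rep a)) $ i" for i
      proof -
        have "l a0 * h0$i + (\<Sum>a\<in>A - {a0}. l a *s rep a) $ i = 0"
          using arg_cong[OF e, of "\<lambda>z. z $ i"] by simp
        then have "(\<Sum>a\<in>A - {a0}. l a *s rep a) $ i = - (l a0 * h0$i)" by linarith
        then show ?thesis using a0(2) by simp
      qed
      then have "- h0 = (1 / l a0) *s (\<Sum>a\<in>A - {a0}. l a *s rep a)"
        by (simp add: vec_eq_iff)
      moreover have "(\<Sum>a\<in>A - {a0}. l a *s rep a) \<in> cone_hullQ H"
        using finA l0 repH by (intro cone_sum) (auto intro!: cone_scale intro: cone_base)
      ultimately have "- h0 \<in> cone_hullQ H" using a0 cone_scale[of _ H "1 / l a0"] by simp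
      then have "- h0 \<in> \<sigma>" using HW by blast
      moreover have "h0 \<in> \<sigma>" using h0H HW cone_base by blast
      ultimately have "h0 = 0" using sc_zero[OF sc] by blast
      then show ?thesis using h0H irr cone_zero unfolding H_def by blast
    qed
  next
    assume "\<exists>v. \<forall>a\<in>A. 0 < (\<Sum>i\<in>UNIV. a i * v i)"
    then obtain v where v: "\<And>a. a\<in>A \<Longrightarrow> 0 < (\<Sum>i\<in>UNIV. a i * v i)" by blast
    define s where "s = (\<Sum>i\<in>UNIV. w$i * v i)"
    define uq :: "rat^'n" where "uq = (\<chi> i. v i - (if i = j0 then s / w$j0 else 0))"
    have key: "(\<Sum>i\<in>UNIV. x$i * uq$i) = (\<Sum>i\<in>UNIV. \<pi> x i * v i)" for x
    proof -
      have "(\<Sum>i\<in>UNIV. x$i * uq$i) = (\<Sum>i\<in>UNIV. x$i * v i - (if i = j0 then x$j0 * s / w$j0 else 0))"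
        by (rule sum.cong) (auto simp: uq_def right_diff_distrib)
      also have "\<dots> = (\<Sum>i\<in>UNIV. x$i * v i) - x$j0 / w$j0 * s" by (simp add: sum_subtractf)
      also have "\<dots> = (\<Sum>i\<in>UNIV. \<pi> x i * v i)"
        unfolding \<pi>_def s_def by (simp add: left_diff_distrib sum_subtractf sum_distrib_left mult.assoc)
      finally show ?thesis .
    qed
    obtain d where d0: "d > 0" and dz: "\<forall>i. \<exists>z::int. of_int d * uq$i = of_int z"
      using int_scale by blast
    obtain z where z: "\<And>i. of_int d * uq$i = of_int (z i)" using dz by metis
    define u :: "int^'n" where "u = (\<chi> i. z i)"
    have pu: "pairQ x u = of_int d * (\<Sum>i\<in>UNIV. \<pi> x i * v i)" for x
      unfolding key[symmetric] pairQ_def u_def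
      by (simp add: z[symmetric] sum_distrib_left algebra_simps)
    have pw: "pairQ w u = 0" unfolding pu by (simp add: \<pi>_def j0)
    have ph: "pairQ h u > 0" if "h \<in> H" for h
      unfolding pu using v[of "\<pi> h"] that d0 by (simp add: A_def)
    have Wnn: "\<forall>x\<in>W. pairQ x u \<ge> 0"
      using pw ph unfolding H_def by (metis Diff_iff less_imp_le order_refl singletonD)
    have sn: "\<forall>x\<in>\<sigma>. pairQ x u \<ge> 0" using pairQ_cone_nonneg Wnn sig by blast
    have pp: "pairQ (ofv p) u = 0" using pw wp m0 by (simp add: pairQ_scale)
    have ps: "ofv p \<in> \<sigma>"
    proof -
      have "ofv p = (1 / of_int m) *s w" using wp m0 by (simp add: vector_smult_assoc)
      then show ?thesis using Ws sig m0 by (simp add: cone_scale)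
    qed
    have face: "cone_hullQ {ofv p} = {x\<in>\<sigma>. pairQ x u = 0}"
    proof
      show "cone_hullQ {ofv p} \<subseteq> {x\<in>\<sigma>. pairQ x u = 0}"
      proof
        fix x assume x: "x \<in> cone_hullQ {ofv p}"
        have "x \<in> \<sigma>" using x ps sig cone_hull_mono[of "{ofv p}" W] by auto
        moreover have "pairQ x u = 0" using pairQ_cone_zero[OF x] pp by simp
        ultimately show "x \<in> {x\<in>\<sigma>. pairQ x u = 0}" by simp
      qed
      show "{x\<in>\<sigma>. pairQ x u = 0} \<subseteq> cone_hullQ {ofv p}"
      proof
        fix x assume x: "x \<in> {x\<in>\<sigma>. pairQ x u = 0}"
        then have "x \<in> cone_hullQ {v\<in>W. pairQ v u = 0}"
          using pairQ_cone_face[of x W u] Wnn sig by auto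
        moreover have "{v\<in>W. pairQ v u = 0} \<subseteq> cone_hullQ {ofv p}"
        proof
          fix v assume "v \<in> {v\<in>W. pairQ v u = 0}"
          then have "v = w" using ph unfolding H_def by force
          then show "v \<in> cone_hullQ {ofv p}" using wp m0 by (simp add: cone_scale cone_base)
        qed
        ultimately show "x \<in> cone_hullQ {ofv p}" using cone_hull_mono by blast
      qed
    qed
    have "p \<in> ray_gens \<sigma>" unfolding ray_gens_def is_face_def using prim sn face by blast
    then show ?thesis using wp m0 by (simp add: cone_scale cone_base)
  qed
qed



lemma ray_decomp:
  fixes \<sigma> :: "(rat^'n::finite) set"
  assumes sc: "strongly_convex \<sigma>" and "finite W" "W \<subseteq> range ofv" "\<sigma> = cone_hullQ W"
  shows "\<sigma> \<subseteq> cone_hullQ (ofv ` ray_gens \<sigma>)"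
  using assms(2-4)
proof (induction "card W" arbitrary: W rule: less_induct)
  case less
  show ?case
  proof (cases "\<exists>w\<in>W. w \<in> cone_hullQ (W - {w})")
    case True
    then obtain w where w: "w \<in> W" "w \<in> cone_hullQ (W - {w})" by blast
    have eq: "cone_hullQ (W - {w}) = cone_hullQ W"
    proof
      show "cone_hullQ (W - {w}) \<subseteq> cone_hullQ W" by (rule cone_hull_mono) (auto intro: cone_base)
      show "cone_hullQ W \<subseteq> cone_hullQ (W - {w})"
        by (rule cone_hull_mono) (use w in \<open>auto intro: cone_base\<close>)
    qed
    have "card (W - {w}) < card W" by (rule card_Diff1_less[OF less.prems(1) w(1)])
    moreover have "finite (W - {w})" "W - {w} \<subseteq> range ofv" "\<sigma> = cone_hullQ (W - {w})"
      using less.prems eq by auto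
    ultimately show ?thesis using less.hyps by blast
  next
    case False
    have "W \<subseteq> cone_hullQ (ofv ` ray_gens \<sigma>)"
      using exposed[OF sc less.prems(1,2,3)] False by blast
    then show ?thesis using cone_hull_mono less.prems(3) by blast
  qed
qed

theorem mainTheorem10:
  fixes \<sigma> \<tau> \<gamma> :: "(rat^'n::finite) set"
    and k :: nat and p e1 e2 :: "nat \<Rightarrow> int^'n"
  assumes "rational_polyhedral_cone \<sigma>" and "strongly_convex \<sigma>"
    and "regular_face_with_gens \<tau> \<sigma> k p"
    and "\<forall>r\<in>{1..k}. demazure_root \<sigma> (p r) (e1 r) \<and> demazure_root \<sigma> (p r) (e2 r)"
    and "\<forall>r\<in>{1..k}. \<forall>s\<in>{1..k}.
           pairZ (p s) (e1 r) = (if r = s then -1 else 0) \<and>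
           pairZ (p s) (e2 r) = (if r = s then -1 else 0)"
    and "is_face \<gamma> \<sigma>"
    and "\<forall>r\<in>{1..k}. ofv (p r) \<notin> \<gamma> \<longrightarrow> e1 r \<in> perp \<gamma> \<or> e2 r \<in> perp \<gamma>"
  shows "is_face (cone_hullQ (\<gamma> \<union> {ofv (p r) | r. r \<in> {1..k} \<and> ofv (p r) \<notin> \<gamma>})) \<sigma>"
proof -
  obtain G where finG: "finite G" and sG: "\<sigma> = cone_hullQ (ofv ` G)"
    using assms(1) unfolding rational_polyhedral_cone_def by blast
  have dec: "\<sigma> \<subseteq> cone_hullQ (ofv ` ray_gens \<sigma>)"
    by (rule ray_decomp[OF assms(2) _ _ sG]) (use finG in auto)
  have rgs: "ofv q \<in> \<sigma>" if "q \<in> ray_gens \<sigma>" for q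
  proof -
    from that obtain u where "cone_hullQ {ofv q} = {x\<in>\<sigma>. pairQ x u = 0}"
      unfolding ray_gens_def is_face_def by blast
    moreover have "ofv q \<in> cone_hullQ {ofv q}" by (rule cone_base) simp
    ultimately show ?thesis by blast
  qed
  obtain u where u0: "\<forall>x\<in>\<sigma>. pairQ x u \<ge> 0" and gam: "\<gamma> = {x\<in>\<sigma>. pairQ x u = 0}"
    using assms(6) unfolding is_face_def by blast
  define R where "R = {r\<in>{1..k}. ofv (p r) \<notin> \<gamma>}"
  have finR: "finite R" unfolding R_def by simp
  define e where "e = (\<lambda>r. if e1 r \<in> perp \<gamma> then e1 r else e2 r)"
  have eperp: "e r \<in> perp \<gamma>" if "r \<in> R" for r
    using assms(7) that unfolding R_def e_def by auto
  have eroot: "demazure_root \<sigma> (p r) (e r)" if "r \<in> {1..k}" for r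
    using assms(4) that unfolding e_def by auto
  have compat: "pairZ (p s) (e r) = (if r = s then -1 else 0)" if "r \<in> {1..k}" "s \<in> {1..k}" for r s
    using assms(5) that unfolding e_def by auto
  have pR: "p r \<in> ray_gens \<sigma>" if "r \<in> {1..k}" for r
    using eroot[OF that] unfolding demazure_root_def by blast
  define c where "c = (\<lambda>r. pairZ (p r) u)"
  have cpos: "c r > 0" if "r \<in> R" for r
  proof -
    have r: "r \<in> {1..k}" "ofv (p r) \<notin> \<gamma>" using that R_def by auto
    have "ofv (p r) \<in> \<sigma>" using rgs pR r(1) by blast
    then have "pairQ (ofv (p r)) u > 0" using u0 r(2) gam by force
    then show ?thesis unfolding c_def pairQ_ofv by simp
  qed
  define u' where "u' = u + (\<Sum>r\<in>R. c r *s e r)"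
  have pu': "pairQ x u' = pairQ x u + (\<Sum>r\<in>R. of_int (c r) * pairQ x (e r))" for x
    unfolding u'_def using finR by (simp add: pairQ_add2 pairQ_sum2 pairQ_scale2)
  have genA: "pairQ (ofv (p s)) u' = 0" if "s \<in> R" for s
  proof -
    have s: "s \<in> {1..k}" using that R_def by auto
    have "(\<Sum>r\<in>R. of_int (c r) * pairQ (ofv (p s)) (e r)) = (\<Sum>r\<in>R. if r = s then - of_int (c s) else 0)"
    proof (rule sum.cong[OF refl])
      fix r assume "r \<in> R"
      then have "r \<in> {1..k}" using R_def by auto
      then have "pairZ (p s) (e r) = (if r = s then -1 else 0)" using compat s by blast
      then show "of_int (c r) * pairQ (ofv (p s)) (e r) = (if r = s then - of_int (c s) else 0)"
        by (simp add: pairQ_ofv)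
    qed
    also have "\<dots> = - of_int (c s)" using finR that by simp
    finally show ?thesis unfolding pu' by (simp add: pairQ_ofv c_def)
  qed
  have genB: "pairQ (ofv q) u \<le> pairQ (ofv q) u'" if "q \<in> ray_gens \<sigma>" "q \<notin> p ` R" for q
  proof -
    have "0 \<le> of_int (c r) * pairQ (ofv q) (e r)" if "r \<in> R" for r
    proof -
      have "r \<in> {1..k}" "q \<noteq> p r" using that \<open>q \<notin> p ` R\<close> R_def by auto
      then have "pairZ q (e r) \<ge> 0" using eroot \<open>q \<in> ray_gens \<sigma>\<close> unfolding demazure_root_def by blast
      then show ?thesis using cpos[OF that] by (simp add: pairQ_ofv)
    qed
    then show ?thesis unfolding pu' by (simp add: sum_nonneg)
  qed
  define S where "S = \<gamma> \<union> {ofv (p r) | r. r \<in> {1..k} \<and> ofv (p r) \<notin> \<gamma>}"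
  have gen_nn: "\<forall>v\<in>ofv ` ray_gens \<sigma>. pairQ v u' \<ge> 0"
  proof
    fix v assume "v \<in> ofv ` ray_gens \<sigma>"
    then obtain q where q: "q \<in> ray_gens \<sigma>" "v = ofv q" by blast
    show "pairQ v u' \<ge> 0"
    proof (cases "q \<in> p ` R")
      case True then show ?thesis using genA q by auto
    next
      case False then show ?thesis using genB[OF q(1) False] u0 rgs[OF q(1)] q(2) by force
    qed
  qed
  have gen_zero: "{v\<in>ofv ` ray_gens \<sigma>. pairQ v u' = 0} \<subseteq> S"
  proof
    fix v assume "v \<in> {v\<in>ofv ` ray_gens \<sigma>. pairQ v u' = 0}"
    then obtain q where q: "q \<in> ray_gens \<sigma>" "v = ofv q" "pairQ v u' = 0" by blast
    show "v \<in> S"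
    proof (cases "q \<in> p ` R")
      case True then show ?thesis using q(2) unfolding S_def R_def by blast
    next
      case False
      then have "pairQ v u \<le> 0" using genB[OF q(1) False] q(2,3) by simp
      moreover have "v \<in> \<sigma>" using rgs q by simp
      ultimately have "pairQ v u = 0" using u0 by force
      then show ?thesis using \<open>v \<in> \<sigma>\<close> gam S_def by blast
    qed
  qed
  have S0: "\<forall>v\<in>S. pairQ v u' = 0"
  proof
    fix v assume "v \<in> S"
    then consider "v \<in> \<gamma>" | r where "r \<in> R" "v = ofv (p r)" unfolding S_def R_def by blast
    then show "pairQ v u' = 0"
    proof cases
      case 1
      then have "pairQ v u = 0" using gam by blast
      moreover have "pairQ v (e r) = 0" if "r \<in> R" for r
        using eperp[OF that] 1 unfolding perp_def by blast
      ultimately show ?thesis unfolding pu' by simp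
    next
      case 2 then show ?thesis using genA by simp
    qed
  qed
  have Ss: "S \<subseteq> \<sigma>"
    unfolding S_def using gam rgs pR by auto
  have face: "cone_hullQ S = {x\<in>\<sigma>. pairQ x u' = 0}"
  proof
    show "cone_hullQ S \<subseteq> {x\<in>\<sigma>. pairQ x u' = 0}"
    proof
      fix x assume x: "x \<in> cone_hullQ S"
      have "cone_hullQ S \<subseteq> \<sigma>" using Ss sG cone_hull_mono[of S "ofv ` G"] by simp
      then show "x \<in> {x\<in>\<sigma>. pairQ x u' = 0}" using x pairQ_cone_zero[OF x S0] by blast
    qed
    show "{x\<in>\<sigma>. pairQ x u' = 0} \<subseteq> cone_hullQ S"
    proof
      fix x assume x: "x \<in> {x\<in>\<sigma>. pairQ x u' = 0}"
      then have "x \<in> cone_hullQ {v\<in>ofv ` ray_gens \<sigma>. pairQ v u' = 0}"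
        using pairQ_cone_face[of x "ofv ` ray_gens \<sigma>" u'] dec gen_nn by blast
      moreover have "cone_hullQ {v\<in>ofv ` ray_gens \<sigma>. pairQ v u' = 0} \<subseteq> cone_hullQ S"
        using gen_zero by (intro cone_hull_mono) (auto intro: cone_base)
      ultimately show "x \<in> cone_hullQ S" by blast
    qed
  qed
  have nn: "\<forall>x\<in>\<sigma>. pairQ x u' \<ge> 0" using dec gen_nn pairQ_cone_nonneg by blast
  show ?thesis unfolding is_face_def S_def[symmetric] using nn face by blast
qed


end
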